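(* Let $C$ be an $\mathbb F_q$-linear $(n,q^k,d)_{q^h}$ code over $\mathbb F_{q^h}$, and let $\mathcal A=\{\pi_1,\dots,\pi_n\}$ be an associated projective $h$-system in $\mathrm{PG}(k-1,q)$, where $\pi_j$ corresponds to coordinate position $j$. Then, for each $i\in[1,n]$, the projective $h$-systems associated to the projection of $C$ from position $i$ are (up to $\mathrm{PGL}$-equivalence) equal to the projection of $\mathcal A$ from $\pi_i$.
   Context: An $\mathbb F_q$-linear code over $\mathbb F_{q^h}$ is an $\mathbb F_q$-subspace of $\mathbb F_{q^h}^n$; here it has $q^k$ codewords, i.e. $\mathbb F_q$-dimension $k$. Associated projective $h$-system: let $G\in\mathbb F_{q^h}^{k\times n}$ have rows forming an $\mathbb F_q$-basis of $C$, fix an $\mathbb F_q$-basis $\alpha=(\alpha_1,\dots,\alpha_h)^t$ of $\mathbb F_{q^h}$, write the $j$-th column of $G$ as $G_j\alpha$ with $G_j\in\mathbb F_q^{k\times h}$, and let $\pi_j$ be the projective subspace of $\mathrm{PG}(k-1,q)$ given by the column space of $G_j$; the multiset $\{\pi_1,\dots,\pi_n\}$ is an associated projective $h$-system (these form a $\mathrm{PGL}(k,q)$-orbit). The projection of $C$ from position $i$ is $\{(x_1,\dots,x_{i-1},x_{i+1},\dots,x_n):(x_1,\dots,x_{i-1},0,x_{i+1},\dots,x_n)\in C\}$. For a subspace $U$ of $V=\mathbb F_q^k$, the projection from $U$ maps a subspace $W$ of $V$ to $(W+U)/U$ in $V/U$; this induces a map from subspaces of $\mathrm{PG}(V)$ to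 subspaces of $\mathrm{PG}(V/U)$. The projection of $\mathcal A$ from $\pi_i$ is the multiset of images of the elements of $\mathcal A\setminus\{\pi_i\}$ (as a multiset, removing the single element $\pi_i$) under projection from the subspace corresponding to $\pi_i$. *)

theory Defs
  imports Main "HOL-Library.Multiset"
begin

text \<open>Everything lives in one field type 'b playing the role of F_{q^h};
  F_q is represented as a subfield F of 'b.  Vectors of length m are
  functions nat => 'b vanishing at all indices >= m (0-based indices).\<close>

definition is_subfield :: "'b::field set \<Rightarrow> bool" where
  "is_subfield F \<longleftrightarrow> 0 \<in> F \<and> 1 \<in> F \<and>
     (\<forall>x\<in>F. \<forall>y\<in>F. x + y \<in> F \<and> x * y \<in> F) \<and>
     (\<forall>x\<in>F. - x \<in> F \<and> inverse x \<in> F)"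

definition is_field_basis :: "'b::field set \<Rightarrow> nat \<Rightarrow> (nat \<Rightarrow> 'b) \<Rightarrow> bool" where
  "is_field_basis F h \<alpha> \<longleftrightarrow>
     (\<forall>c. (\<forall>l<h. c l \<in> F) \<longrightarrow> (\<Sum>l<h. c l * \<alpha> l) = 0 \<longrightarrow> (\<forall>l<h. c l = 0)) \<and>
     (\<forall>x. \<exists>c. (\<forall>l<h. c l \<in> F) \<and> x = (\<Sum>l<h. c l * \<alpha> l))"

definition vecs :: "nat \<Rightarrow> (nat \<Rightarrow> 'b::field) set" where
  "vecs m = {x. \<forall>j\<ge>m. x j = 0}"

definition Fvecs :: "'b::field set \<Rightarrow> nat \<Rightarrow> (nat \<Rightarrow> 'b) set" where
  "Fvecs F m = {v. (\<forall>r<m. v r \<in> F) \<and> (\<forall>r\<ge>m. v r = 0)}"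

definition fcomb :: "'b::field set \<Rightarrow> nat \<Rightarrow> (nat \<Rightarrow> nat \<Rightarrow> 'b) \<Rightarrow> (nat \<Rightarrow> 'b) set" where
  "fcomb F m v = {(\<lambda>j. \<Sum>r<m. c r * v r j) | c. \<forall>r<m. c r \<in> F}"

definition F_indep :: "'b::field set \<Rightarrow> nat \<Rightarrow> (nat \<Rightarrow> nat \<Rightarrow> 'b) \<Rightarrow> bool" where
  "F_indep F m v \<longleftrightarrow> (\<forall>c. (\<forall>r<m. c r \<in> F) \<longrightarrow> (\<lambda>j. \<Sum>r<m. c r * v r j) = (\<lambda>j. 0)
      \<longrightarrow> (\<forall>r<m. c r = 0))"

definition F_basis :: "'b::field set \<Rightarrow> nat \<Rightarrow> (nat \<Rightarrow> nat \<Rightarrow> 'b) \<Rightarrow> (nat \<Rightarrow> 'b) set \<Rightarrow> bool" where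
  "F_basis F m v S \<longleftrightarrow> F_indep F m v \<and> fcomb F m v = S"

definition F_subspace :: "'b::field set \<Rightarrow> (nat \<Rightarrow> 'b) set \<Rightarrow> bool" where
  "F_subspace F S \<longleftrightarrow> (\<lambda>j. 0) \<in> S \<and> (\<forall>x\<in>S. \<forall>y\<in>S. (\<lambda>j. x j + y j) \<in> S) \<and>
     (\<forall>c\<in>F. \<forall>x\<in>S. (\<lambda>j. c * x j) \<in> S)"

definition Flinear_code :: "'b::field set \<Rightarrow> nat \<Rightarrow> nat \<Rightarrow> (nat \<Rightarrow> 'b) set \<Rightarrow> bool" where
  "Flinear_code F n k C \<longleftrightarrow> C \<subseteq> vecs n \<and> F_subspace F C \<and> card C = card F ^ k"

text \<open>As is (the list, indexed by coordinate positions 0..n-1, of) an associated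
  projective h-system of C: G (k x n, rows an F-basis of C) has j-th column
  G_j alpha with G_j = Gc j a k x h matrix over F, and As!j is the column space
  of G_j, an F-subspace of F^k (projective subspaces of PG(k-1,q) are identified
  with the corresponding vector subspaces of F^k).\<close>
definition assoc_system :: "'b::field set \<Rightarrow> nat \<Rightarrow> (nat \<Rightarrow> 'b) \<Rightarrow> nat \<Rightarrow> nat \<Rightarrow>
    (nat \<Rightarrow> 'b) set \<Rightarrow> (nat \<Rightarrow> 'b) set list \<Rightarrow> bool" where
  "assoc_system F h \<alpha> k n C As \<longleftrightarrow>
     (\<exists>G Gc. (\<forall>j<n. \<forall>r<k. \<forall>l<h. Gc j r l \<in> F) \<and>
        (\<forall>r<k. \<forall>j<n. G r j = (\<Sum>l<h. Gc j r l * \<alpha> l)) \<and>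
        F_basis F k (\<lambda>r j. if j < n then G r j else 0) C \<and>
        As = map (\<lambda>j. fcomb F h (\<lambda>l r. if r < k then Gc j r l else 0)) [0..<n])"

definition proj_code :: "nat \<Rightarrow> (nat \<Rightarrow> 'b::zero) set \<Rightarrow> (nat \<Rightarrow> 'b) set" where
  "proj_code i C = {(\<lambda>j. if j < i then x j else x (Suc j)) | x. x \<in> C \<and> x i = 0}"

definition mat_app :: "nat \<Rightarrow> nat \<Rightarrow> (nat \<Rightarrow> nat \<Rightarrow> 'b::field) \<Rightarrow> (nat \<Rightarrow> 'b) \<Rightarrow> (nat \<Rightarrow> 'b)" where
  "mat_app k' k P v = (\<lambda>r. if r < k' then (\<Sum>s<k. P r s * v s) else 0)"

text \<open>P realises the quotient map F^k -> F^k / U, with F^k/U identified with F^k'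
  (any such identification is a PGL-equivalence): P is F-linear, surjective
  onto F^k' and has kernel exactly U.\<close>
definition quotient_map :: "'b::field set \<Rightarrow> nat \<Rightarrow> nat \<Rightarrow> (nat \<Rightarrow> 'b) set \<Rightarrow>
    (nat \<Rightarrow> nat \<Rightarrow> 'b) \<Rightarrow> bool" where
  "quotient_map F k k' U P \<longleftrightarrow>
     (\<forall>r<k'. \<forall>s<k. P r s \<in> F) \<and>
     mat_app k' k P ` Fvecs F k = Fvecs F k' \<and>
     {v \<in> Fvecs F k. mat_app k' k P v = (\<lambda>r. 0)} = U"

end

theory Submission
  imports Defs
begin


lemma sf_0: "is_subfield F \<Longrightarrow> 0 \<in> F" by (simp add: is_subfield_def)
lemma sf_1: "is_subfield F \<Longrightarrow> 1 \<in> F" by (simp add: is_subfield_def)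
lemma sf_add: "is_subfield F \<Longrightarrow> x \<in> F \<Longrightarrow> y \<in> F \<Longrightarrow> x + y \<in> F" by (simp add: is_subfield_def)
lemma sf_mult: "is_subfield F \<Longrightarrow> x \<in> F \<Longrightarrow> y \<in> F \<Longrightarrow> x * y \<in> F" by (simp add: is_subfield_def)
lemma sf_uminus: "is_subfield F \<Longrightarrow> x \<in> F \<Longrightarrow> - x \<in> F" by (simp add: is_subfield_def)
lemma sf_inverse: "is_subfield F \<Longrightarrow> x \<in> F \<Longrightarrow> inverse x \<in> F" by (simp add: is_subfield_def)
lemma sf_diff: "is_subfield F \<Longrightarrow> x \<in> F \<Longrightarrow> y \<in> F \<Longrightarrow> x - y \<in> F"
  using sf_add[of F x "- y"] sf_uminus[of F y] by simp
lemma sf_divide: "is_subfield F \<Longrightarrow> x \<in> F \<Longrightarrow> y \<in> F \<Longrightarrow> x / y \<in> F"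
  using sf_mult[of F x "inverse y"] sf_inverse[of F y] by (simp add: divide_inverse)
lemma sf_sum: "is_subfield F \<Longrightarrow> (\<And>x. x \<in> A \<Longrightarrow> f x \<in> F) \<Longrightarrow> sum f A \<in> F"
proof (induction A rule: infinite_finite_induct)
  case (infinite A) then show ?case by (simp add: sf_0)
next
  case empty then show ?case by (simp add: sf_0)
next
  case (insert x A) then show ?case by (simp add: sf_add)
qed

definition dotp :: "nat \<Rightarrow> (nat \<Rightarrow> 'b::field) \<Rightarrow> (nat \<Rightarrow> 'b) \<Rightarrow> 'b" where
  "dotp k c v = (\<Sum>s<k. c s * v s)"

lemma dotp_lin: "dotp k c (\<lambda>j. x j - a * y j) = dotp k c x - a * dotp k c y"
  by (simp add: dotp_def algebra_simps sum_subtractf sum_distrib_left)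

lemma zero_in_fcomb: "is_subfield F \<Longrightarrow> (\<lambda>j. 0) \<in> fcomb F m u"
  unfolding fcomb_def using sf_0[of F] by (auto intro!: exI[of _ "\<lambda>_. 0"])

lemma sep:
  fixes F :: "'b::field set"
  assumes sf: "is_subfield F"
  shows "(\<forall>l<m. u l \<in> Fvecs F k) \<Longrightarrow> v \<in> Fvecs F k \<Longrightarrow> v \<notin> fcomb F m u \<Longrightarrow>
     \<exists>c\<in>Fvecs F k. (\<forall>l<m. dotp k c (u l) = 0) \<and> dotp k c v \<noteq> 0"
proof (induction k arbitrary: u v)
  case 0
  then have "v = (\<lambda>j. 0)" by (auto simp: Fvecs_def)
  then show ?case using 0 zero_in_fcomb[OF sf] by simp
next
  case (Suc k)
  show ?case
  proof (cases "\<exists>p<m. u p k \<noteq> 0")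
    case False
    show ?thesis
    proof (cases "v k = 0")
      case True
      have u': "\<forall>l<m. u l \<in> Fvecs F k" using Suc.prems(1) False
        by (auto simp: Fvecs_def) (metis le_eq_less_or_eq Suc_leI)
      have v': "v \<in> Fvecs F k" using Suc.prems(2) True
        by (auto simp: Fvecs_def) (metis le_eq_less_or_eq Suc_leI)
      obtain c where c: "c \<in> Fvecs F k" "\<forall>l<m. dotp k c (u l) = 0" "dotp k c v \<noteq> 0"
        using Suc.IH[OF u' v' Suc.prems(3)] by blast
      have ck: "c k = 0" using c(1) by (simp add: Fvecs_def)
      have d: "dotp (Suc k) c w = dotp k c w" for w by (simp add: dotp_def ck)
      have "c \<in> Fvecs F (Suc k)" using c(1) sf_0[OF sf] by (auto simp: Fvecs_def less_Suc_eq)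
      then show ?thesis using c(2,3) by (intro bexI[of _ c]) (auto simp: d)
    next
      case False
      define c where "c = (\<lambda>r. if r = k then (1::'b) else 0)"
      have d: "dotp (Suc k) c w = w k" for w by (simp add: dotp_def c_def)
      have "c \<in> Fvecs F (Suc k)" using sf_0[OF sf] sf_1[OF sf] by (auto simp: Fvecs_def c_def)
      then show ?thesis using False \<open>\<not> (\<exists>p<m. u p k \<noteq> 0)\<close> by (intro bexI[of _ c]) (auto simp: d)
    qed
  next
    case True
    then obtain p where p: "p < m" "u p k \<noteq> 0" by blast
    define \<beta> where "\<beta> = u p k"
    have \<beta>: "\<beta> \<noteq> 0" "\<beta> \<in> F" using p Suc.prems(1) by (auto simp: \<beta>_def Fvecs_def)
    define u' where "u' = (\<lambda>l j. u l j - (u l k / \<beta>) * u p j)"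
    define v' where "v' = (\<lambda>j. v j - (v k / \<beta>) * u p j)"
    have upF: "u p \<in> Fvecs F (Suc k)" using Suc.prems(1) p by auto
    have u'F: "\<forall>l<m. u' l \<in> Fvecs F k"
    proof (intro allI impI)
      fix l assume l: "l < m"
      have ul: "u l \<in> Fvecs F (Suc k)" using Suc.prems(1) l by auto
      show "u' l \<in> Fvecs F k"
        unfolding Fvecs_def u'_def
      proof (intro CollectI conjI allI impI)
        fix r assume "r < k"
        then show "u l r - u l k / \<beta> * u p r \<in> F" using ul upF \<beta>
          by (auto simp: Fvecs_def intro!: sf_diff[OF sf] sf_mult[OF sf] sf_divide[OF sf])
      next
        fix r assume r: "r \<ge> k"
        show "u l r - u l k / \<beta> * u p r = 0"
        proof (cases "r = k")
          case True then show ?thesis using \<beta> by (simp add: \<beta>_def)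
        next
          case False then have "r \<ge> Suc k" using r by simp
          then show ?thesis using ul upF by (simp add: Fvecs_def)
        qed
      qed
    qed
    have v'F: "v' \<in> Fvecs F k"
      unfolding Fvecs_def v'_def
    proof (intro CollectI conjI allI impI)
      fix r assume "r < k"
      then show "v r - v k / \<beta> * u p r \<in> F" using Suc.prems(2) upF \<beta>
        by (auto simp: Fvecs_def intro!: sf_diff[OF sf] sf_mult[OF sf] sf_divide[OF sf])
    next
      fix r assume r: "r \<ge> k"
      show "v r - v k / \<beta> * u p r = 0"
      proof (cases "r = k")
        case True then show ?thesis using \<beta> by (simp add: \<beta>_def)
      next
        case False then have "r \<ge> Suc k" using r by simp
        then show ?thesis using Suc.prems(2) upF by (simp add: Fvecs_def)
      qed
    qed
    have v'n: "v' \<notin> fcomb F m u'"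
    proof
      assume "v' \<in> fcomb F m u'"
      then obtain a where a: "\<forall>r<m. a r \<in> F" "v' = (\<lambda>j. \<Sum>r<m. a r * u' r j)"
        by (auto simp: fcomb_def)
      define \<gamma> where "\<gamma> = v k / \<beta> - (\<Sum>r<m. a r * (u r k / \<beta>))"
      define b where "b = (\<lambda>l. a l + (if l = p then \<gamma> else 0))"
      have bF: "\<forall>r<m. b r \<in> F"
      proof (intro allI impI)
        fix r assume r: "r < m"
        have "\<gamma> \<in> F" unfolding \<gamma>_def using a(1) Suc.prems \<beta> upF
          by (auto simp: Fvecs_def intro!: sf_diff[OF sf] sf_mult[OF sf] sf_divide[OF sf] sf_sum[OF sf])
        then show "b r \<in> F" using a(1) r sf_0[OF sf] by (auto simp: b_def intro!: sf_add[OF sf])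
      qed
      have "v = (\<lambda>j. \<Sum>r<m. b r * u r j)"
      proof
        fix j
        have e1: "(\<Sum>r<m. (if r = p then \<gamma> else 0) * u r j) = \<gamma> * u p j"
          proof -
          have "(\<Sum>r<m. (if r = p then \<gamma> else 0) * u r j) = (\<Sum>r<m. if r = p then \<gamma> * u r j else 0)"
            by (rule sum.cong) auto
          then show ?thesis using p(1) by simp
        qed
        have "v j = v' j + (v k / \<beta>) * u p j" by (simp add: v'_def)
        also have "\<dots> = (\<Sum>r<m. a r * u r j) - (\<Sum>r<m. a r * (u r k / \<beta>)) * u p j + (v k / \<beta>) * u p j"
        proof -
          have "(\<Sum>r<m. a r * u' r j) = (\<Sum>r<m. a r * u r j - (a r * (u r k / \<beta>)) * u p j)"
            by (rule sum.cong) (simp_all add: u'_def right_diff_distrib mult.assoc)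
          also have "\<dots> = (\<Sum>r<m. a r * u r j) - (\<Sum>r<m. a r * (u r k / \<beta>)) * u p j"
            by (simp add: sum_subtractf sum_distrib_right)
          finally show ?thesis by (simp add: a(2))
        qed
        also have "\<dots> = (\<Sum>r<m. a r * u r j) + \<gamma> * u p j"
          by (simp add: \<gamma>_def algebra_simps)
        also have "\<dots> = (\<Sum>r<m. b r * u r j)"
          by (simp add: b_def distrib_right sum.distrib e1)
        finally show "v j = (\<Sum>r<m. b r * u r j)" .
      qed
      then have "v \<in> fcomb F m u" using bF by (auto simp: fcomb_def)
      then show False using Suc.prems(3) by blast
    qed
    obtain c' where c': "c' \<in> Fvecs F k" "\<forall>l<m. dotp k c' (u' l) = 0" "dotp k c' v' \<noteq> 0"
      using Suc.IH[OF u'F v'F v'n] by blast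
    define t where "t = - dotp k c' (u p) / \<beta>"
    define c where "c = c'(k := t)"
    have d: "dotp (Suc k) c w = dotp k c' w + t * w k" for w
    proof -
      have "(\<Sum>s<k. (c'(k:=t)) s * w s) = (\<Sum>s<k. c' s * w s)" by (rule sum.cong) auto
      then show ?thesis by (simp add: dotp_def c_def)
    qed
    have dup: "dotp (Suc k) c (u p) = 0" using \<beta> by (simp add: d t_def \<beta>_def)
    have dl: "dotp (Suc k) c w = dotp (Suc k) c (\<lambda>j. w j - (w k / \<beta>) * u p j)" for w
      by (subst dotp_lin) (simp add: dup)
    have "\<forall>l<m. dotp (Suc k) c (u l) = 0"
    proof (intro allI impI)
      fix l assume l: "l < m"
      have "dotp (Suc k) c (u l) = dotp (Suc k) c (u' l)" unfolding u'_def by (rule dl)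
      also have "\<dots> = dotp k c' (u' l) + t * u' l k" by (rule d)
      also have "\<dots> = 0" using c'(2) l \<beta> by (simp add: u'_def \<beta>_def)
      finally show "dotp (Suc k) c (u l) = 0" .
    qed
    moreover have "dotp (Suc k) c v \<noteq> 0"
    proof -
      have "dotp (Suc k) c v = dotp (Suc k) c v'" unfolding v'_def by (rule dl)
      also have "\<dots> = dotp k c' v'" using \<beta> by (simp add: d v'_def \<beta>_def)
      finally show ?thesis using c'(3) by simp
    qed
    moreover have "c \<in> Fvecs F (Suc k)"
    proof -
      have "t \<in> F" unfolding t_def dotp_def using c'(1) upF \<beta>
        by (auto simp: Fvecs_def intro!: sf_uminus[OF sf] sf_divide[OF sf] sf_sum[OF sf] sf_mult[OF sf])
      then show ?thesis using c'(1) by (auto simp: Fvecs_def c_def less_Suc_eq)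
    qed
    ultimately show ?thesis by blast
  qed
qed




lemma swap2: fixes d :: "nat \<Rightarrow> 'a::comm_semiring_1" shows "(\<Sum>r<a. d r * (\<Sum>s<b. P r s * Y s)) = (\<Sum>s<b. (\<Sum>r<a. d r * P r s) * Y s)"
proof -
  have "(\<Sum>r<a. d r * (\<Sum>s<b. P r s * Y s)) = (\<Sum>r<a. \<Sum>s<b. d r * P r s * Y s)"
    by (simp add: sum_distrib_left mult.assoc)
  also have "\<dots> = (\<Sum>s<b. \<Sum>r<a. d r * P r s * Y s)" by (rule sum.swap)
  also have "\<dots> = (\<Sum>s<b. (\<Sum>r<a. d r * P r s) * Y s)" by (simp add: sum_distrib_right)
  finally show ?thesis .
qed

lemma alpha_uniq:
  assumes "is_subfield F" "is_field_basis F h \<alpha>" "\<forall>l<h. a l \<in> F" "\<forall>l<h. b l \<in> F"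
    "(\<Sum>l<h. a l * \<alpha> l) = (\<Sum>l<h. b l * \<alpha> l)" "l < h"
  shows "a l = b l"
proof -
  have S: "(\<Sum>l<h. (a l - b l) * \<alpha> l) = 0"
    using assms(5) by (simp add: left_diff_distrib sum_subtractf)
  have D: "\<forall>l<h. a l - b l \<in> F" using assms(1,3,4) by (auto intro: sf_diff)
  have H: "\<forall>c. (\<forall>l<h. c l \<in> F) \<longrightarrow> (\<Sum>l<h. c l * \<alpha> l) = 0 \<longrightarrow> (\<forall>l<h. c l = 0)"
    using assms(2) unfolding is_field_basis_def by (rule conjunct1)
  have "a l - b l = 0" using H[rule_format, of "\<lambda>l. a l - b l", OF D[rule_format] S assms(6)] .
  then show ?thesis by simp
qed

definition sh :: "nat \<Rightarrow> nat \<Rightarrow> nat" where "sh i j = (if j < i then j else Suc j)"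

lemma proj_code_alt: "proj_code i C = {(\<lambda>j. x (sh i j)) | x. x \<in> C \<and> x i = 0}"
  unfolding proj_code_def sh_def by (auto intro!: ext)

lemma fcomb_mat:
  "mat_app k' k P ` fcomb F h (\<lambda>l r. if r < k then M r l else 0)
   = fcomb F h (\<lambda>l r. if r < k' then (\<Sum>s<k. P r s * M s l) else 0)"
proof -
  have e: "mat_app k' k P (\<lambda>j. \<Sum>l<h. a l * (if j < k then M j l else 0))
      = (\<lambda>j. \<Sum>l<h. a l * (if j < k' then (\<Sum>s<k. P j s * M s l) else 0))" for a
  proof
    fix r
    show "mat_app k' k P (\<lambda>j. \<Sum>l<h. a l * (if j < k then M j l else 0)) r
      = (\<Sum>l<h. a l * (if r < k' then (\<Sum>s<k. P r s * M s l) else 0))"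
    proof (cases "r < k'")
      case True
      have "(\<Sum>s<k. P r s * (\<Sum>l<h. a l * (if s < k then M s l else 0)))
          = (\<Sum>s<k. P r s * (\<Sum>l<h. a l * M s l))" by (rule sum.cong) auto
      also have "\<dots> = (\<Sum>l<h. (\<Sum>s<k. P r s * M s l) * a l)"
        using swap2[where a=k and d="P r" and P="\<lambda>s l. M s l" and b=h and Y=a] by (simp add: mult.commute)
      also have "\<dots> = (\<Sum>l<h. a l * (\<Sum>s<k. P r s * M s l))" by (simp add: mult.commute)
      finally show ?thesis using True by (simp add: mat_app_def)
    qed (simp add: mat_app_def)
  qed
  show ?thesis unfolding fcomb_def
  proof (intro equalityI subsetI)
    fix y assume "y \<in> mat_app k' k P ` {\<lambda>j. \<Sum>l<h. a l * (if j < k then M j l else 0) |a. \<forall>l<h. a l \<in> F}"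
    then obtain a where a: "\<forall>l<h. a l \<in> F" "y = mat_app k' k P (\<lambda>j. \<Sum>l<h. a l * (if j < k then M j l else 0))"
      by blast
    then have "y = (\<lambda>j. \<Sum>l<h. a l * (if j < k' then (\<Sum>s<k. P j s * M s l) else 0))" by (simp only: e)
    then show "y \<in> {\<lambda>j. \<Sum>l<h. a l * (if j < k' then (\<Sum>s<k. P j s * M s l) else 0) |a. \<forall>l<h. a l \<in> F}"
      using a(1) by blast
  next
    fix y assume "y \<in> {\<lambda>j. \<Sum>l<h. a l * (if j < k' then (\<Sum>s<k. P j s * M s l) else 0) |a. \<forall>l<h. a l \<in> F}"
    then obtain a where a: "\<forall>l<h. a l \<in> F" "y = (\<lambda>j. \<Sum>l<h. a l * (if j < k' then (\<Sum>s<k. P j s * M s l) else 0))"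
      by blast
    then have "y = mat_app k' k P (\<lambda>j. \<Sum>l<h. a l * (if j < k then M j l else 0))" by (simp only: e)
    then show "y \<in> mat_app k' k P ` {\<lambda>j. \<Sum>l<h. a l * (if j < k then M j l else 0) |a. \<forall>l<h. a l \<in> F}"
      using a(1) by blast
  qed
qed

lemma fcomb_cong: assumes "\<And>l. l < h \<Longrightarrow> u l = u' l" shows "fcomb F h u = fcomb F h u'"
proof -
  have "(\<lambda>j. \<Sum>l<h. c l * u l j) = (\<lambda>j. \<Sum>l<h. c l * u' l j)" for c
    by (intro ext sum.cong) (auto simp: assms)
  then show ?thesis unfolding fcomb_def by simp
qed

lemma mset_drop:
  assumes "length xs = n" "i < n"
  shows "mset xs - {# xs ! i #} = mset (map (\<lambda>j. xs ! sh i j) [0..<n-1])"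
proof -
  have xs: "xs = map (\<lambda>j. xs ! j) [0..<i] @ xs ! i # map (\<lambda>j. xs ! j) [Suc i..<n]"
  proof -
    have "[0..<n] = [0..<i] @ [i..<n]" using upt_add_eq_append[of 0 i "n-i"] assms(2) by simp
    also have "[i..<n] = i # [Suc i..<n]" using assms(2) by (rule upt_conv_Cons)
    finally have "[0..<n] = [0..<i] @ i # [Suc i..<n]" .
    then show ?thesis using map_nth[of xs] assms(1) by (metis list.simps(9) map_append)
  qed
  have r: "map (\<lambda>j. xs ! sh i j) [0..<n-1] = map (\<lambda>j. xs ! j) [0..<i] @ map (\<lambda>j. xs ! j) [Suc i..<n]"
  proof -
    have "[0..<n-1] = [0..<i] @ [i..<n-1]" using upt_add_eq_append[of 0 i "n-1-i"] assms(2) by simp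
    moreover have "map (\<lambda>j. xs ! sh i j) [0..<i] = map (\<lambda>j. xs ! j) [0..<i]"
      by (simp add: sh_def)
    moreover have "map (\<lambda>j. xs ! sh i j) [i..<n-1] = map (\<lambda>j. xs ! j) [Suc i..<n]"
    proof -
      have "map (\<lambda>j. xs ! sh i j) [i..<n-1] = map (\<lambda>j. xs ! Suc j) [i..<n-1]"
        by (simp add: sh_def)
      also have "\<dots> = map (\<lambda>j. xs ! j) (map Suc [i..<n-1])" by simp
      also have "map Suc [i..<n-1] = [Suc i..<n]" using assms(2) by (simp add: map_Suc_upt)
      finally show ?thesis .
    qed
    ultimately show ?thesis by simp
  qed
  have "mset xs = mset (map (\<lambda>j. xs ! j) [0..<i] @ xs ! i # map (\<lambda>j. xs ! j) [Suc i..<n])"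
    using xs by (rule arg_cong)
  then have "mset xs - {#xs ! i#} = mset (map (\<lambda>j. xs ! j) [0..<i] @ xs ! i # map (\<lambda>j. xs ! j) [Suc i..<n]) - {#xs ! i#}"
    by (rule arg_cong)
  also have "\<dots> = mset (map (\<lambda>j. xs ! j) [0..<i] @ map (\<lambda>j. xs ! j) [Suc i..<n])"
    by (simp only: mset_append mset.simps) simp
  also have "\<dots> = mset (map (\<lambda>j. xs ! sh i j) [0..<n-1])" by (simp only: r)
  finally show ?thesis .
qed



locale ctx =
  fixes F :: "'b::field set" and h :: nat and \<alpha> :: "nat \<Rightarrow> 'b" and k n :: nat
    and G :: "nat \<Rightarrow> nat \<Rightarrow> 'b" and Gc :: "nat \<Rightarrow> nat \<Rightarrow> nat \<Rightarrow> 'b" and i :: nat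
    and C :: "(nat \<Rightarrow> 'b) set"
  assumes sf: "is_subfield F" and fb: "is_field_basis F h \<alpha>"
    and GcF: "\<forall>j<n. \<forall>r<k. \<forall>l<h. Gc j r l \<in> F"
    and Gdef: "\<forall>r<k. \<forall>j<n. G r j = (\<Sum>l<h. Gc j r l * \<alpha> l)"
    and bas: "F_basis F k (\<lambda>r j. if j < n then G r j else 0) C"
    and i: "i < n"
begin

definition Gm where "Gm r j = (if j < n then G r j else 0)"
definition X where "X c = (\<lambda>j. \<Sum>s<k. c s * Gm s j)"
definition ui where "ui l = (\<lambda>r. if r < k then Gc i r l else (0::'b))"
definition oi where "oi c l = (\<Sum>s<k. c s * Gc i s l)"

lemma C_eq: "C = {X c | c. \<forall>r<k. c r \<in> F}"
proof -
  have GmE: "Gm = (\<lambda>r j. if j < n then G r j else 0)" by (intro ext) (simp add: Gm_def)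
  have "fcomb F k Gm = C" using bas unfolding F_basis_def GmE by (rule conjunct2)
  moreover have "fcomb F k Gm = {X c | c. \<forall>r<k. c r \<in> F}" by (simp only: fcomb_def X_def)
  ultimately show ?thesis by simp
qed

lemma X_indep: "\<forall>r<k. c r \<in> F \<Longrightarrow> X c = (\<lambda>j. 0) \<Longrightarrow> \<forall>r<k. c r = 0"
proof -
  assume c: "\<forall>r<k. c r \<in> F" and x: "X c = (\<lambda>j. 0)"
  have GmE: "Gm = (\<lambda>r j. if j < n then G r j else 0)" by (intro ext) (simp add: Gm_def)
  have H: "F_indep F k Gm" using bas unfolding F_basis_def GmE by (rule conjunct1)
  have e: "(\<lambda>j. \<Sum>r<k. c r * Gm r j) = (\<lambda>j. 0)" using x by (simp only: X_def)
  have "(\<forall>r<k. c r \<in> F) \<longrightarrow> (\<lambda>j. \<Sum>r<k. c r * Gm r j) = (\<lambda>j. 0) \<longrightarrow> (\<forall>r<k. c r = 0)"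
    using H unfolding F_indep_def by (rule spec)
  then show ?thesis using c e by blast
qed

lemma X_at: "j < n \<Longrightarrow> X c j = (\<Sum>l<h. (\<Sum>s<k. c s * Gc j s l) * \<alpha> l)"
proof -
  assume j: "j < n"
  have "X c j = (\<Sum>s<k. c s * G s j)" by (simp add: X_def Gm_def j)
  also have "\<dots> = (\<Sum>s<k. c s * (\<Sum>l<h. Gc j s l * \<alpha> l))"
    by (rule sum.cong) (use Gdef j in auto)
  also have "\<dots> = (\<Sum>l<h. (\<Sum>s<k. c s * Gc j s l) * \<alpha> l)" by (rule swap2)
  finally show ?thesis .
qed

lemma X_out: "j \<ge> n \<Longrightarrow> X c j = 0"
  by (simp add: X_def Gm_def)

lemma oiF: "\<forall>s<k. c s \<in> F \<Longrightarrow> l < h \<Longrightarrow> oi c l \<in> F"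
proof -
  assume c: "\<forall>s<k. c s \<in> F" and l: "l < h"
  show ?thesis unfolding oi_def
  proof (rule sf_sum[OF sf])
    fix s assume "s \<in> {..<k}"
    then show "c s * Gc i s l \<in> F" using c GcF i l by (intro sf_mult[OF sf]) auto
  qed
qed

lemma X_i: "\<forall>s<k. c s \<in> F \<Longrightarrow> X c i = 0 \<longleftrightarrow> (\<forall>l<h. oi c l = 0)"
proof
  assume c: "\<forall>s<k. c s \<in> F" and "X c i = 0"
  then have "(\<Sum>l<h. oi c l * \<alpha> l) = (\<Sum>l<h. (\<lambda>_. 0) l * \<alpha> l)"
    using X_at[OF i] by (simp add: oi_def)
  then show "\<forall>l<h. oi c l = 0"
  proof (intro allI impI)
    fix l assume l: "l < h"
    have "\<forall>l<h. oi c l \<in> F" using oiF[OF c] by blast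
    moreover have "\<forall>l<h. (\<lambda>_. 0) l \<in> F" using sf_0[OF sf] by simp
    ultimately show "oi c l = 0" using alpha_uniq[OF sf fb _ _ \<open>(\<Sum>l<h. oi c l * \<alpha> l) = (\<Sum>l<h. (\<lambda>_. 0) l * \<alpha> l)\<close> l] by simp
  qed
next
  assume "\<forall>l<h. oi c l = 0"
  then show "X c i = 0" using X_at[OF i] by (simp add: oi_def)
qed

lemma X_ext: "\<forall>s<k. c s = c' s \<Longrightarrow> X c = X c'"
  unfolding X_def by (auto intro!: ext sum.cong)

lemma X_lin: "(\<Sum>r<(m::nat). d r * X (P r) j) = X (\<lambda>s. \<Sum>r<m. d r * P r s) j"
  unfolding X_def using swap2[where d=d and a=m and P=P and b=k and Y="\<lambda>s. Gm s j"] by simp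

lemma sh_lt: "j < n - 1 \<Longrightarrow> sh i j < n"
  using i unfolding sh_def by (cases "j < i") auto
lemma sh_ge: "j \<ge> n - 1 \<Longrightarrow> sh i j \<ge> n"
  using i unfolding sh_def by (cases "j < i") auto

lemma X_eq_drop: "X c i = X c' i \<Longrightarrow> (\<forall>j. X c (sh i j) = X c' (sh i j)) \<Longrightarrow> X c = X c'"
proof
  fix j assume a: "X c i = X c' i" "\<forall>j. X c (sh i j) = X c' (sh i j)"
  show "X c j = X c' j"
  proof (cases "j < i")
    case True then show ?thesis using a(2)[rule_format, of j] by (simp add: sh_def)
  next
    case False
    show ?thesis
    proof (cases "j = i")
      case True then show ?thesis using a(1) by simp
    next
      case False
      then have "sh i (j - 1) = j" using \<open>\<not> j < i\<close> by (simp add: sh_def)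
      then show ?thesis using a(2)[rule_format, of "j - 1"] by simp
    qed
  qed
qed

lemma X_inj: "\<forall>s<k. c s \<in> F \<Longrightarrow> \<forall>s<k. c' s \<in> F \<Longrightarrow> X c = X c' \<Longrightarrow> s < k \<Longrightarrow> c s = c' s"
proof -
  assume c: "\<forall>s<k. c s \<in> F" and c': "\<forall>s<k. c' s \<in> F" and e: "X c = X c'" and s: "s < k"
  have "X (\<lambda>s. c s - c' s) = (\<lambda>j. 0)"
  proof
    fix j
    have "X (\<lambda>s. c s - c' s) j = X c j - X c' j"
      unfolding X_def by (simp add: left_diff_distrib sum_subtractf)
    then show "X (\<lambda>s. c s - c' s) j = 0" using e by simp
  qed
  moreover have "\<forall>r<k. c r - c' r \<in> F" using c c' by (auto intro: sf_diff[OF sf])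
  ultimately have "\<forall>r<k. c r - c' r = 0" using X_indep[of "\<lambda>s. c s - c' s"] by blast
  then show ?thesis using s by simp
qed

lemma ui_Fvecs: "l < h \<Longrightarrow> ui l \<in> Fvecs F k"
  unfolding Fvecs_def ui_def using GcF i by auto

lemma ui_in: "l < h \<Longrightarrow> ui l \<in> fcomb F h ui"
proof -
  assume l: "l < h"
  have e: "ui l = (\<lambda>j. \<Sum>l'<h. (if l' = l then 1 else 0) * ui l' j)"
  proof
    fix j
    have "(\<Sum>l'<h. (if l' = l then 1 else 0) * ui l' j) = (\<Sum>l'<h. if l' = l then ui l' j else 0)"
      by (rule sum.cong) auto
    then show "ui l j = (\<Sum>l'<h. (if l' = l then 1 else 0) * ui l' j)" using l by simp
  qed
  have Fc: "\<forall>l'<h. (if l' = l then 1 else 0) \<in> F" using sf_0[OF sf] sf_1[OF sf] by auto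
  show ?thesis unfolding fcomb_def
    apply (rule CollectI) apply (rule exI[of _ "\<lambda>l'. if l' = l then 1 else 0"])
    apply (rule conjI) apply (rule e) apply (rule Fc) done
qed

lemma dotp_ui: "dotp k c (ui l) = oi c l"
  unfolding dotp_def oi_def ui_def by (rule sum.cong) auto

lemma fcomb_ui_Fvecs: "w \<in> fcomb F h ui \<Longrightarrow> w \<in> Fvecs F k"
proof -
  assume "w \<in> fcomb F h ui"
  then obtain a where a: "\<forall>l<h. a l \<in> F" "w = (\<lambda>j. \<Sum>l<h. a l * ui l j)"
    unfolding fcomb_def by blast
  show ?thesis unfolding Fvecs_def
  proof (intro CollectI conjI allI impI)
    fix r assume r: "r < k"
    show "w r \<in> F" unfolding a(2)
    proof (rule sf_sum[OF sf])
      fix l assume "l \<in> {..<h}"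
      then show "a l * ui l r \<in> F" using a(1) ui_Fvecs[of l] r by (intro sf_mult[OF sf]) (auto simp: Fvecs_def)
    qed
  next
    fix r assume "k \<le> r"
    then show "w r = 0" unfolding a(2) by (simp add: ui_def)
  qed
qed

end



context ctx begin

lemma X_zero: "X (\<lambda>_. 0) = (\<lambda>j. 0)"
  by (simp add: X_def)

lemma Fvec_unit: "r < m \<Longrightarrow> (\<lambda>r'. if r' = r then 1 else 0) \<in> Fvecs F m"
  unfolding Fvecs_def using sf_0[OF sf] sf_1[OF sf] by auto

lemma sum_unit: "r < (m::nat) \<Longrightarrow> (\<Sum>r'<m. d r' * (if r' = r then 1 else 0)) = (d r :: 'b)"
proof -
  assume r: "r < m"
  have "(\<Sum>r'<m. d r' * (if r' = r then 1 else 0)) = (\<Sum>r'<m. if r' = r then d r' else 0)"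
    by (rule sum.cong) auto
  also have "\<dots> = d r" using r by (subst sum.delta) auto
  finally show ?thesis .
qed

lemma dirA:
  assumes qm: "quotient_map F k k' (fcomb F h ui) P"
  shows "assoc_system F h \<alpha> k' (n - 1) (proj_code i C)
          (map (\<lambda>j. fcomb F h (\<lambda>l r. if r < k' then (\<Sum>s<k. P r s * Gc (sh i j) s l) else 0)) [0..<n - 1])"
proof -
  have PF: "\<forall>r<k'. \<forall>s<k. P r s \<in> F" using qm unfolding quotient_map_def by blast
  have surj: "mat_app k' k P ` Fvecs F k = Fvecs F k'" using qm unfolding quotient_map_def by blast
  have ker: "{v \<in> Fvecs F k. mat_app k' k P v = (\<lambda>r. 0)} = fcomb F h ui"
    using qm unfolding quotient_map_def by blast
  have orth: "oi (P r) l = 0" if rl: "r < k'" "l < h" for r l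
  proof -
    have "ui l \<in> {v \<in> Fvecs F k. mat_app k' k P v = (\<lambda>r. 0)}" using ker ui_in[OF rl(2)] by simp
    then have "mat_app k' k P (ui l) r = 0" by simp
    moreover have "(\<Sum>s<k. P r s * ui l s) = oi (P r) l" unfolding oi_def ui_def by (rule sum.cong) auto
    ultimately show ?thesis using rl(1) by (simp add: mat_app_def)
  qed
  define e where "e d = (\<lambda>s. \<Sum>r<k'. d r * P r s)" for d :: "nat \<Rightarrow> 'b"
  have eF: "\<forall>s<k. e d s \<in> F" if "\<forall>r<k'. d r \<in> F" for d
  proof (intro allI impI)
    fix s assume s: "s < k"
    show "e d s \<in> F" unfolding e_def
    proof (rule sf_sum[OF sf])
      fix r assume "r \<in> {..<k'}" then show "d r * P r s \<in> F" using that PF s by (intro sf_mult[OF sf]) auto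
    qed
  qed
  have Xe_i: "X (e d) i = 0" for d
  proof -
    have "(\<Sum>s<k. e d s * Gc i s l) = 0" if l: "l < h" for l
    proof -
      have "(\<Sum>s<k. e d s * Gc i s l) = (\<Sum>r<k'. d r * oi (P r) l)"
        unfolding e_def oi_def by (rule swap2[symmetric])
      also have "\<dots> = 0" using orth l by simp
      finally show ?thesis .
    qed
    then show ?thesis using X_at[OF i] by simp
  qed
  have rows_indep: "d r = 0" if d: "\<forall>s<k. e d s = 0" and r: "r < k'" for d r
  proof -
    have "(\<lambda>r'. if r' = r then 1 else 0) \<in> mat_app k' k P ` Fvecs F k" using surj Fvec_unit[OF r] by simp
    then obtain v where v: "v \<in> Fvecs F k" "(\<lambda>r'. if r' = r then 1 else 0) = mat_app k' k P v" by blast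
    have vv: "(if r' = r then 1 else 0) = (\<Sum>s<k. P r' s * v s)" if "r' < k'" for r'
      using fun_cong[OF v(2), of r'] that by (simp add: mat_app_def)
    have "d r = (\<Sum>r'<k'. d r' * (if r' = r then 1 else 0))" using sum_unit[OF r] by simp
    also have "\<dots> = (\<Sum>r'<k'. d r' * (\<Sum>s<k. P r' s * v s))"
      by (rule sum.cong) (simp_all add: vv)
    also have "\<dots> = (\<Sum>s<k. e d s * v s)" unfolding e_def by (rule swap2)
    also have "\<dots> = 0" using d by simp
    finally show ?thesis .
  qed
  define G' where "G' r j = (\<Sum>s<k. P r s * G s (sh i j))" for r j
  define Gc' where "Gc' j r l = (\<Sum>s<k. P r s * Gc (sh i j) s l)" for j r l
  define G'm where "G'm r j = (if j < n - 1 then G' r j else 0)" for r j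
  have G'mX: "G'm r j = X (P r) (sh i j)" for r j
  proof (cases "j < n - 1")
    case True
    then show ?thesis using sh_lt[OF True] by (simp add: G'm_def G'_def X_def Gm_def)
  next
    case False
    then show ?thesis using sh_ge[of j] X_out by (simp add: G'm_def)
  qed
  have comb: "(\<lambda>j. \<Sum>r<k'. d r * G'm r j) = (\<lambda>j. X (e d) (sh i j))" for d
  proof
    fix j
    show "(\<Sum>r<k'. d r * G'm r j) = X (e d) (sh i j)"
      unfolding G'mX e_def by (rule X_lin)
  qed
  have G'mE: "(\<lambda>r j. if j < n - 1 then G' r j else 0) = G'm" by (intro ext) (simp add: G'm_def)
  have indep: "F_indep F k' G'm"
    unfolding F_indep_def
  proof (intro allI impI)
    fix d r assume dF: "\<forall>r<k'. d r \<in> F" and z: "(\<lambda>j. \<Sum>r<k'. d r * G'm r j) = (\<lambda>j. 0)" and r: "r < k'"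
    have "\<forall>j. X (e d) (sh i j) = X (\<lambda>_. 0) (sh i j)" using z unfolding comb X_zero by meson
    moreover have "X (e d) i = X (\<lambda>_. 0) i" using Xe_i X_zero by simp
    ultimately have "X (e d) = X (\<lambda>_. 0)" using X_eq_drop by blast
    then have "\<forall>s<k. e d s = 0" using X_inj[OF eF[OF dF], of "\<lambda>_. 0"] sf_0[OF sf] by simp
    then show "d r = 0" using rows_indep r by blast
  qed
  have span: "fcomb F k' G'm = proj_code i C"
  proof (intro equalityI subsetI)
    fix y assume "y \<in> fcomb F k' G'm"
    then obtain d where d: "\<forall>r<k'. d r \<in> F" "y = (\<lambda>j. \<Sum>r<k'. d r * G'm r j)"
      unfolding fcomb_def by blast
    have "X (e d) \<in> C" using C_eq eF[OF d(1)] by blast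
    then show "y \<in> proj_code i C" unfolding proj_code_alt d(2) comb using Xe_i by blast
  next
    fix y assume "y \<in> proj_code i C"
    then obtain x where x: "x \<in> C" "x i = 0" "y = (\<lambda>j. x (sh i j))"
      unfolding proj_code_alt by blast
    then obtain c where c: "\<forall>r<k. c r \<in> F" "x = X c" using C_eq by blast
    have oc: "\<forall>l<h. oi c l = 0" using X_i[OF c(1)] x(2) c(2) by simp
    define pr where "pr r = (\<lambda>s. if s < k then P r s else 0)" for r
    define cv where "cv = (\<lambda>s. if s < k then c s else 0)"
    have prF: "\<forall>r<k'. pr r \<in> Fvecs F k" using PF unfolding pr_def Fvecs_def by auto
    have cvF: "cv \<in> Fvecs F k" using c(1) unfolding cv_def Fvecs_def by auto
    have "cv \<in> fcomb F k' pr"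
    proof (rule ccontr)
      assume "cv \<notin> fcomb F k' pr"
      then obtain w where w: "w \<in> Fvecs F k" "\<forall>r<k'. dotp k w (pr r) = 0" "dotp k w cv \<noteq> 0"
        using sep[OF sf prF cvF] by blast
      have "mat_app k' k P w = (\<lambda>r. 0)"
      proof
        fix r
        show "mat_app k' k P w r = 0"
        proof (cases "r < k'")
          case True
          have "(\<Sum>s<k. P r s * w s) = dotp k w (pr r)"
            unfolding dotp_def pr_def by (rule sum.cong) (simp_all add: mult.commute)
          then show ?thesis using True w(2) by (simp add: mat_app_def)
        qed (simp add: mat_app_def)
      qed
      then have "w \<in> fcomb F h ui" using ker w(1) by blast
      then obtain a where a: "w = (\<lambda>j. \<Sum>l<h. a l * ui l j)" unfolding fcomb_def by blast
      have "dotp k w cv = (\<Sum>s<k. (\<Sum>l<h. a l * ui l s) * c s)"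
        unfolding dotp_def cv_def a by (rule sum.cong) simp_all
      also have "\<dots> = (\<Sum>l<h. a l * (\<Sum>s<k. ui l s * c s))" by (rule swap2[symmetric])
      also have "\<dots> = (\<Sum>l<h. a l * oi c l)"
      proof (rule sum.cong)
        fix l
        have "(\<Sum>s<k. ui l s * c s) = oi c l" unfolding oi_def ui_def
          by (rule sum.cong) (simp_all add: mult.commute)
        then show "a l * (\<Sum>s<k. ui l s * c s) = a l * oi c l" by simp
      qed simp
      also have "\<dots> = 0" using oc by simp
      finally show False using w(3) by simp
    qed
    then obtain d where d: "\<forall>r<k'. d r \<in> F" "cv = (\<lambda>s. \<Sum>r<k'. d r * pr r s)"
      unfolding fcomb_def by blast
    have "\<forall>s<k. c s = e d s"
    proof (intro allI impI)
      fix s assume s: "s < k"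
      have "c s = cv s" using s by (simp add: cv_def)
      also have "\<dots> = e d s" unfolding d(2) e_def pr_def using s by simp
      finally show "c s = e d s" .
    qed
    then have "x = X (e d)" using c(2) X_ext by simp
    then have "y = (\<lambda>j. \<Sum>r<k'. d r * G'm r j)" using x(3) comb by simp
    then show "y \<in> fcomb F k' G'm" using d(1) unfolding fcomb_def by blast
  qed
  have GcF': "\<forall>j<n - 1. \<forall>r<k'. \<forall>l<h. Gc' j r l \<in> F"
  proof (intro allI impI)
    fix j r l assume j: "j < n - 1" and r: "r < k'" and l: "l < h"
    show "Gc' j r l \<in> F" unfolding Gc'_def
    proof (rule sf_sum[OF sf])
      fix s assume "s \<in> {..<k}"
      then show "P r s * Gc (sh i j) s l \<in> F" using PF GcF sh_lt[OF j] r l by (intro sf_mult[OF sf]) auto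
    qed
  qed
  have Gdef': "\<forall>r<k'. \<forall>j<n - 1. G' r j = (\<Sum>l<h. Gc' j r l * \<alpha> l)"
  proof (intro allI impI)
    fix r j assume r: "r < k'" and j: "j < n - 1"
    have "G' r j = (\<Sum>s<k. P r s * (\<Sum>l<h. Gc (sh i j) s l * \<alpha> l))"
      unfolding G'_def by (rule sum.cong) (use Gdef sh_lt[OF j] in auto)
    also have "\<dots> = (\<Sum>l<h. Gc' j r l * \<alpha> l)" unfolding Gc'_def by (rule swap2)
    finally show "G' r j = (\<Sum>l<h. Gc' j r l * \<alpha> l)" .
  qed
  have Gc'E: "Gc' = (\<lambda>j r l. \<Sum>s<k. P r s * Gc (sh i j) s l)" by (intro ext) (simp add: Gc'_def)
  show ?thesis unfolding assoc_system_def
    apply (rule exI[of _ G'], rule exI[of _ Gc'])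
    apply (intro conjI)
       apply (rule GcF')
      apply (rule Gdef')
     apply (unfold G'mE F_basis_def, intro conjI, rule indep, rule span)
    apply (simp only: Gc'E)
    done
qed

end


context ctx begin

lemma sum_unit2: "r < (m::nat) \<Longrightarrow> (\<Sum>r'<m. (if r' = r then 1 else 0) * d r') = (d r :: 'b)"
  using sum_unit[of r m d] by (simp add: mult.commute)

lemma dirB:
  assumes as: "assoc_system F h \<alpha> k' (n - 1) (proj_code i C) Bs"
  shows "\<exists>P. quotient_map F k k' (fcomb F h ui) P \<and>
    Bs = map (\<lambda>j. fcomb F h (\<lambda>l r. if r < k' then (\<Sum>s<k. P r s * Gc (sh i j) s l) else 0)) [0..<n - 1]"
proof -
  obtain G' Gc' where Gc'F: "\<forall>j<n - 1. \<forall>r<k'. \<forall>l<h. Gc' j r l \<in> F"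
    and G'def: "\<forall>r<k'. \<forall>j<n - 1. G' r j = (\<Sum>l<h. Gc' j r l * \<alpha> l)"
    and bas': "F_basis F k' (\<lambda>r j. if j < n - 1 then G' r j else 0) (proj_code i C)"
    and Bs: "Bs = map (\<lambda>j. fcomb F h (\<lambda>l r. if r < k' then Gc' j r l else 0)) [0..<n - 1]"
    using as unfolding assoc_system_def by (elim exE conjE) blast
  define G'm where "G'm = (\<lambda>r j. if j < n - 1 then G' r j else 0)"
  have indep': "F_indep F k' G'm" using bas' unfolding F_basis_def G'm_def by (rule conjunct1)
  have span': "fcomb F k' G'm = proj_code i C" using bas' unfolding F_basis_def G'm_def by (rule conjunct2)
  have rowin: "G'm r \<in> proj_code i C" if r: "r < k'" for r
  proof -
    have e: "G'm r = (\<lambda>j. \<Sum>r'<k'. (if r' = r then 1 else 0) * G'm r' j)"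
      using sum_unit2[OF r] by simp
    have Fc: "\<forall>r'<k'. (if r' = r then 1 else 0) \<in> F" using sf_0[OF sf] sf_1[OF sf] by auto
    have "G'm r \<in> fcomb F k' G'm" unfolding fcomb_def
      apply (rule CollectI) apply (rule exI[of _ "\<lambda>r'. if r' = r then 1 else 0"])
      apply (rule conjI) apply (rule e) apply (rule Fc) done
    then show ?thesis using span' by simp
  qed
  have ex: "\<forall>r. \<exists>c. r < k' \<longrightarrow> (\<forall>s<k. c s \<in> F) \<and> X c i = 0 \<and> G'm r = (\<lambda>j. X c (sh i j))"
  proof
    fix r
    show "\<exists>c. r < k' \<longrightarrow> (\<forall>s<k. c s \<in> F) \<and> X c i = 0 \<and> G'm r = (\<lambda>j. X c (sh i j))"
    proof (cases "r < k'")
      case True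
      then obtain x where x: "x \<in> C" "x i = 0" "G'm r = (\<lambda>j. x (sh i j))"
        using rowin[OF True] unfolding proj_code_alt by blast
      then obtain c where c: "\<forall>r<k. c r \<in> F" "x = X c" using C_eq by blast
      show ?thesis using x c by blast
    qed simp
  qed
  obtain P where P: "\<forall>r. r < k' \<longrightarrow> (\<forall>s<k. P r s \<in> F) \<and> X (P r) i = 0 \<and> G'm r = (\<lambda>j. X (P r) (sh i j))"
    using choice[OF ex] by blast
  have PF: "\<forall>r<k'. \<forall>s<k. P r s \<in> F" using P by blast
  have orth: "oi (P r) l = 0" if "r < k'" "l < h" for r l
    using P that X_i[of "P r"] by blast
  have PG: "G'm r j = X (P r) (sh i j)" if "r < k'" for r j
    using P that by metis
  define e where "e d = (\<lambda>s. \<Sum>r<k'. d r * P r s)" for d :: "nat \<Rightarrow> 'b"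
  have eF: "\<forall>s<k. e d s \<in> F" if "\<forall>r<k'. d r \<in> F" for d
  proof (intro allI impI)
    fix s assume s: "s < k"
    show "e d s \<in> F" unfolding e_def
    proof (rule sf_sum[OF sf])
      fix r assume "r \<in> {..<k'}" then show "d r * P r s \<in> F" using that PF s by (intro sf_mult[OF sf]) auto
    qed
  qed
  have Xe_i: "X (e d) i = 0" for d
  proof -
    have "(\<Sum>s<k. e d s * Gc i s l) = 0" if l: "l < h" for l
    proof -
      have "(\<Sum>s<k. e d s * Gc i s l) = (\<Sum>r<k'. d r * oi (P r) l)"
        unfolding e_def oi_def by (rule swap2[symmetric])
      also have "\<dots> = 0" using orth l by simp
      finally show ?thesis .
    qed
    then show ?thesis using X_at[OF i] by simp
  qed
  have comb: "(\<lambda>j. \<Sum>r<k'. d r * G'm r j) = (\<lambda>j. X (e d) (sh i j))" for d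
  proof
    fix j
    have "(\<Sum>r<k'. d r * G'm r j) = (\<Sum>r<k'. d r * X (P r) (sh i j))"
      by (rule sum.cong) (simp_all add: PG)
    also have "\<dots> = X (e d) (sh i j)" unfolding e_def by (rule X_lin)
    finally show "(\<Sum>r<k'. d r * G'm r j) = X (e d) (sh i j)" .
  qed
  have Gc'eq: "Gc' j r l = (\<Sum>s<k. P r s * Gc (sh i j) s l)" if j: "j < n - 1" and r: "r < k'" and l: "l < h" for j r l
  proof -
    have "(\<Sum>l<h. Gc' j r l * \<alpha> l) = G' r j" using G'def j r by simp
    also have "\<dots> = G'm r j" using j by (simp add: G'm_def)
    also have "\<dots> = X (P r) (sh i j)" using PG[OF r] .
    also have "\<dots> = (\<Sum>l<h. (\<Sum>s<k. P r s * Gc (sh i j) s l) * \<alpha> l)" by (rule X_at[OF sh_lt[OF j]])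
    finally have eq: "(\<Sum>l<h. Gc' j r l * \<alpha> l) = (\<Sum>l<h. (\<Sum>s<k. P r s * Gc (sh i j) s l) * \<alpha> l)" .
    have F1: "\<forall>l<h. Gc' j r l \<in> F" using Gc'F j r by blast
    have F2: "\<forall>l<h. (\<Sum>s<k. P r s * Gc (sh i j) s l) \<in> F"
    proof (intro allI impI)
      fix l assume l: "l < h"
      show "(\<Sum>s<k. P r s * Gc (sh i j) s l) \<in> F"
      proof (rule sf_sum[OF sf])
        fix s assume "s \<in> {..<k}"
        then show "P r s * Gc (sh i j) s l \<in> F" using PF GcF sh_lt[OF j] r l by (intro sf_mult[OF sf]) auto
      qed
    qed
    show ?thesis using alpha_uniq[OF sf fb F1 F2 eq l] .
  qed
  have BsE: "Bs = map (\<lambda>j. fcomb F h (\<lambda>l r. if r < k' then (\<Sum>s<k. P r s * Gc (sh i j) s l) else 0)) [0..<n - 1]"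
    unfolding Bs
  proof (rule map_cong[OF refl])
    fix j assume "j \<in> set [0..<n - 1]"
    then have j: "j < n - 1" by simp
    show "fcomb F h (\<lambda>l r. if r < k' then Gc' j r l else 0)
        = fcomb F h (\<lambda>l r. if r < k' then (\<Sum>s<k. P r s * Gc (sh i j) s l) else 0)"
    proof (rule fcomb_cong)
      fix l assume l: "l < h"
      show "(\<lambda>r. if r < k' then Gc' j r l else 0) = (\<lambda>r. if r < k' then (\<Sum>s<k. P r s * Gc (sh i j) s l) else 0)"
        using Gc'eq[OF j _ l] by (intro ext) simp
    qed
  qed
  have img: "mat_app k' k P ` Fvecs F k = Fvecs F k'"
  proof (intro equalityI subsetI)
    fix w assume "w \<in> mat_app k' k P ` Fvecs F k"
    then obtain v where v: "v \<in> Fvecs F k" "w = mat_app k' k P v" by blast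
    show "w \<in> Fvecs F k'" unfolding Fvecs_def
    proof (intro CollectI conjI allI impI)
      fix r assume r: "r < k'"
      show "w r \<in> F" unfolding v(2) mat_app_def using r
      proof (simp, intro sf_sum[OF sf])
        fix s assume "s \<in> {..<k}"
        then show "P r s * v s \<in> F" using PF r v(1) by (intro sf_mult[OF sf]) (auto simp: Fvecs_def)
      qed
    next
      fix r assume "k' \<le> r" then show "w r = 0" unfolding v(2) mat_app_def by simp
    qed
  next
    fix w assume wF: "w \<in> Fvecs F k'"
    define q where "q s = (\<lambda>r. if r < k' then P r s else 0)" for s
    have qF: "\<forall>s<k. q s \<in> Fvecs F k'" using PF unfolding q_def Fvecs_def by auto
    show "w \<in> mat_app k' k P ` Fvecs F k"
    proof (cases "w \<in> fcomb F k q")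
      case True
      then obtain a where a: "\<forall>s<k. a s \<in> F" "w = (\<lambda>r. \<Sum>s<k. a s * q s r)" unfolding fcomb_def by blast
      define v where "v = (\<lambda>s. if s < k then a s else 0)"
      have vF: "v \<in> Fvecs F k" using a(1) unfolding v_def Fvecs_def by auto
      have "w = mat_app k' k P v"
      proof
        fix r show "w r = mat_app k' k P v r"
        proof (cases "r < k'")
          case True
          have "(\<Sum>s<k. a s * q s r) = (\<Sum>s<k. P r s * v s)"
            unfolding q_def v_def using True by (intro sum.cong) (simp_all add: mult.commute)
          then show ?thesis using True a(2) by (simp add: mat_app_def)
        next
          case False then show ?thesis using a(2) by (simp add: mat_app_def q_def)
        qed
      qed
      then show ?thesis using vF by blast
    next
      case False
      then obtain d where d: "d \<in> Fvecs F k'" "\<forall>s<k. dotp k' d (q s) = 0" "dotp k' d w \<noteq> 0"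
        using sep[OF sf qF wF] by blast
      have "e d s = 0" if s: "s < k" for s
      proof -
        have "e d s = dotp k' d (q s)" unfolding e_def dotp_def q_def by (rule sum.cong) simp_all
        then show ?thesis using d(2) s by simp
      qed
      then have "X (e d) = X (\<lambda>_. 0)" using X_ext by simp
      then have "(\<lambda>j. \<Sum>r<k'. d r * G'm r j) = (\<lambda>j. 0)" unfolding comb X_zero by simp
      moreover have "\<forall>r<k'. d r \<in> F" using d(1) by (simp add: Fvecs_def)
      ultimately have "\<forall>r<k'. d r = 0" using indep' unfolding F_indep_def by blast
      then have "dotp k' d w = 0" unfolding dotp_def by simp
      then show ?thesis using d(3) by simp
    qed
  qed
  have uiF: "\<forall>l<h. ui l \<in> Fvecs F k" using ui_Fvecs by blast
  have kernel: "{v \<in> Fvecs F k. mat_app k' k P v = (\<lambda>r. 0)} = fcomb F h ui"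
  proof (intro equalityI subsetI)
    fix v assume "v \<in> {v \<in> Fvecs F k. mat_app k' k P v = (\<lambda>r. 0)}"
    then have vF: "v \<in> Fvecs F k" and mv: "mat_app k' k P v = (\<lambda>r. 0)" by auto
    show "v \<in> fcomb F h ui"
    proof (rule ccontr)
      assume "v \<notin> fcomb F h ui"
      then obtain c where c: "c \<in> Fvecs F k" "\<forall>l<h. dotp k c (ui l) = 0" "dotp k c v \<noteq> 0"
        using sep[OF sf uiF vF] by blast
      have cF: "\<forall>s<k. c s \<in> F" using c(1) by (simp add: Fvecs_def)
      have "\<forall>l<h. oi c l = 0" using c(2) dotp_ui by simp
      then have Xci: "X c i = 0" using X_i[OF cF] by simp
      have "X c \<in> C" using C_eq cF by blast
      then have "(\<lambda>j. X c (sh i j)) \<in> fcomb F k' G'm" unfolding span' proj_code_alt using Xci by blast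
      then obtain d where d: "\<forall>r<k'. d r \<in> F" "(\<lambda>j. X c (sh i j)) = (\<lambda>j. \<Sum>r<k'. d r * G'm r j)"
        unfolding fcomb_def by blast
      have "\<forall>j. X c (sh i j) = X (e d) (sh i j)" using d(2) unfolding comb by meson
      moreover have "X c i = X (e d) i" using Xci Xe_i by simp
      ultimately have "X c = X (e d)" using X_eq_drop by blast
      then have ce: "\<forall>s<k. c s = e d s" using X_inj[OF cF eF[OF d(1)]] by blast
      have "dotp k c v = (\<Sum>s<k. e d s * v s)" unfolding dotp_def using ce by simp
      also have "\<dots> = (\<Sum>r<k'. d r * (\<Sum>s<k. P r s * v s))" unfolding e_def by (rule swap2[symmetric])
      also have "\<dots> = (\<Sum>r<k'. d r * mat_app k' k P v r)" by (rule sum.cong) (simp_all add: mat_app_def)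
      also have "\<dots> = 0" using mv by simp
      finally show False using c(3) by simp
    qed
  next
    fix w assume w: "w \<in> fcomb F h ui"
    then obtain a where a: "w = (\<lambda>j. \<Sum>l<h. a l * ui l j)" unfolding fcomb_def by blast
    have "mat_app k' k P w = (\<lambda>r. 0)"
    proof
      fix r show "mat_app k' k P w r = 0"
      proof (cases "r < k'")
        case True
        have "(\<Sum>s<k. P r s * w s) = (\<Sum>s<k. P r s * (\<Sum>l<h. ui l s * a l))"
          unfolding a by (simp add: mult.commute)
        also have "\<dots> = (\<Sum>l<h. (\<Sum>s<k. P r s * ui l s) * a l)" by (rule swap2)
        also have "\<dots> = (\<Sum>l<h. oi (P r) l * a l)"
        proof (rule sum.cong)
          fix l
          have "(\<Sum>s<k. P r s * ui l s) = oi (P r) l" unfolding oi_def ui_def by (rule sum.cong) simp_all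
          then show "(\<Sum>s<k. P r s * ui l s) * a l = oi (P r) l * a l" by simp
        qed simp
        also have "\<dots> = 0" using orth[OF True] by simp
        finally show ?thesis using True by (simp add: mat_app_def)
      qed (simp add: mat_app_def)
    qed
    then show "w \<in> {v \<in> Fvecs F k. mat_app k' k P v = (\<lambda>r. 0)}" using fcomb_ui_Fvecs[OF w] by simp
  qed
  have "quotient_map F k k' (fcomb F h ui) P"
    unfolding quotient_map_def using PF img kernel by blast
  then show ?thesis using BsE by blast
qed

end


theorem lemma3p10:
  fixes F :: "'b::field set" and \<alpha> :: "nat \<Rightarrow> 'b"
    and h n k k' i :: nat and C :: "(nat \<Rightarrow> 'b) set"
    and As :: "(nat \<Rightarrow> 'b) set list"
  assumes "finite (UNIV :: 'b set)"
    and "is_subfield F"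
    and "is_field_basis F h \<alpha>"
    and "Flinear_code F n k C"
    and "assoc_system F h \<alpha> k n C As"
    and "i < n"
    and "card (proj_code i C) = card F ^ k'"
  shows "{mset Bs | Bs. assoc_system F h \<alpha> k' (n - 1) (proj_code i C) Bs}
       = {image_mset (\<lambda>W. mat_app k' k P ` W) (mset As - {# As ! i #}) | P.
            quotient_map F k k' (As ! i) P}"
proof -
  obtain G Gc where GcF: "\<forall>j<n. \<forall>r<k. \<forall>l<h. Gc j r l \<in> F"
    and Gdef: "\<forall>r<k. \<forall>j<n. G r j = (\<Sum>l<h. Gc j r l * \<alpha> l)"
    and bas: "F_basis F k (\<lambda>r j. if j < n then G r j else 0) C"
    and AsE: "As = map (\<lambda>j. fcomb F h (\<lambda>l r. if r < k then Gc j r l else 0)) [0..<n]"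
    using assms(5) unfolding assoc_system_def by (elim exE conjE) blast
  interpret ctx F h \<alpha> k n G Gc i C
    using assms(2,3,6) GcF Gdef bas by unfold_locales
  have lenAs: "length As = n" by (simp add: AsE)
  have Asj: "As ! j = fcomb F h (\<lambda>l r. if r < k then Gc j r l else 0)" if "j < n" for j
  proof -
    have u: "[0..<n] ! j = j" using nth_upt[of 0 j n] that by simp
    show ?thesis using that unfolding AsE by (subst nth_map) (simp, subst u, rule refl)
  qed
  have uiE: "ui = (\<lambda>l r. if r < k then Gc i r l else 0)" by (intro ext) (simp add: ui_def)
  have Asi: "As ! i = fcomb F h ui" using Asj[OF assms(6)] uiE by simp
  have Meq: "mset (map (\<lambda>j. fcomb F h (\<lambda>l r. if r < k' then (\<Sum>s<k. P r s * Gc (sh i j) s l) else 0)) [0..<n - 1])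
      = image_mset (\<lambda>W. mat_app k' k P ` W) (mset As - {# As ! i #})" for P
  proof -
    have "image_mset (\<lambda>W. mat_app k' k P ` W) (mset As - {# As ! i #})
        = image_mset (\<lambda>W. mat_app k' k P ` W) (mset (map (\<lambda>j. As ! sh i j) [0..<n - 1]))"
      using mset_drop[OF lenAs assms(6)] by simp
    also have "\<dots> = mset (map (\<lambda>j. mat_app k' k P ` (As ! sh i j)) [0..<n - 1])"
      by (simp only: mset_map multiset.map_comp comp_def)
    also have "map (\<lambda>j. mat_app k' k P ` (As ! sh i j)) [0..<n - 1]
        = map (\<lambda>j. fcomb F h (\<lambda>l r. if r < k' then (\<Sum>s<k. P r s * Gc (sh i j) s l) else 0)) [0..<n - 1]"
    proof (rule map_cong[OF refl])
      fix j assume "j \<in> set [0..<n - 1]"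
      then have j: "j < n - 1" by simp
      show "mat_app k' k P ` (As ! sh i j) = fcomb F h (\<lambda>l r. if r < k' then (\<Sum>s<k. P r s * Gc (sh i j) s l) else 0)"
        using Asj[OF sh_lt[OF j]] fcomb_mat[of k' k P F h "\<lambda>r l. Gc (sh i j) r l"] by simp
    qed
    finally show ?thesis by simp
  qed
  show ?thesis
  proof (intro equalityI subsetI)
    fix M assume "M \<in> {mset Bs | Bs. assoc_system F h \<alpha> k' (n - 1) (proj_code i C) Bs}"
    then obtain Bs where M: "M = mset Bs" and B: "assoc_system F h \<alpha> k' (n - 1) (proj_code i C) Bs" by blast
    obtain P where P: "quotient_map F k k' (fcomb F h ui) P"
      and BsE: "Bs = map (\<lambda>j. fcomb F h (\<lambda>l r. if r < k' then (\<Sum>s<k. P r s * Gc (sh i j) s l) else 0)) [0..<n - 1]"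
      using dirB[OF B] by blast
    have "M = image_mset (\<lambda>W. mat_app k' k P ` W) (mset As - {# As ! i #})" using M BsE Meq by simp
    then show "M \<in> {image_mset (\<lambda>W. mat_app k' k P ` W) (mset As - {# As ! i #}) | P.
            quotient_map F k k' (As ! i) P}" using P Asi by auto
  next
    fix M assume "M \<in> {image_mset (\<lambda>W. mat_app k' k P ` W) (mset As - {# As ! i #}) | P.
            quotient_map F k k' (As ! i) P}"
    then obtain P where M: "M = image_mset (\<lambda>W. mat_app k' k P ` W) (mset As - {# As ! i #})"
      and P: "quotient_map F k k' (As ! i) P" by blast
    have P': "quotient_map F k k' (fcomb F h ui) P" using P Asi by simp
    have "M = mset (map (\<lambda>j. fcomb F h (\<lambda>l r. if r < k' then (\<Sum>s<k. P r s * Gc (sh i j) s l) else 0)) [0..<n - 1])"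
      using M Meq by simp
    then show "M \<in> {mset Bs | Bs. assoc_system F h \<alpha> k' (n - 1) (proj_code i C) Bs}"
      using dirA[OF P'] by blast
  qed
qed


end
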